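(* Let $\xi=e^{i\pi/5}\in\mathbb{C}$, $\tau=\frac{1+\sqrt5}{2}$, $\tau'=\frac{1-\sqrt5}{2}$. For $n\in\mathbb{N}_0$ let $Q_2(n)=\{\sum_{j=0}^9 n_j\xi^j: n_j\in\mathbb{N}_0,\ \sum_j n_j\le n\}$ and $L(n)=Q_2(n)\cap\mathbb{R}$. Then $L(2)\setminus L(1)=\{\pm2,\pm\tau,\pm\tau'\}$.
   Context: $Q_2(n)$ is the $H_2^{\mathrm{aff}}$-induced quasicrystal fragment (all linear combinations of at most $n$ tenth roots of unity with nonnegative integer coefficients); $L(n)$ is its intersection with the real line, denoted $L_{\alpha_1}(n)$ in the paper. *)

theory Defs
  imports "HOL-Analysis.Analysis"
begin

definition xi :: complex where
  "xi = exp (\<i> * complex_of_real (pi / 5))"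

definition tau :: real where
  "tau = (1 + sqrt 5) / 2"

definition tau' :: real where
  "tau' = (1 - sqrt 5) / 2"

definition Q2 :: "nat \<Rightarrow> complex set" where
  "Q2 n = {z. \<exists>c :: nat \<Rightarrow> nat. (\<Sum>j<10. c j) \<le> n \<and>
                 z = (\<Sum>j<10. of_nat (c j) * xi ^ j)}"

definition L :: "nat \<Rightarrow> real set" where
  "L n = {x. complex_of_real x \<in> Q2 n}"

end

theory Submission imports Defs begin

lemma xi_pow: "xi ^ j = Complex (cos (real j * pi / 5)) (sin (real j * pi / 5))"
proof -
  have "xi ^ j = exp (of_nat j * (\<i> * complex_of_real (pi / 5)))"
    unfolding xi_def by (simp only: exp_of_nat_mult)
  also have "\<dots> = cis (real j * pi / 5)" by (simp add: cis_conv_exp mult_ac)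
  finally show ?thesis by (simp add: complex_eq_iff)
qed

lemma c1: "cos (pi/5) = (1 + sqrt 5) / 4"
proof -
  define c where "c = cos (pi/5)"
  have cpos: "c > 0" unfolding c_def by (rule cos_gt_zero) auto
  have e: "3 * (pi/5) = pi - 2 * (pi/5)" by simp
  have "cos (3 * (pi/5)) = cos (pi - 2 * (pi/5))" by (simp only: e)
  also have "\<dots> = - cos (2 * (pi/5))" by (rule cos_pi_minus)
  finally have "4 * c^3 - 3*c = -(2*c^2 - 1)"
    unfolding c_def cos_treble_cos cos_double_cos by simp
  hence "(c+1) * (4*c^2 - 2*c - 1) = 0" by (simp add: algebra_simps power2_eq_square power3_eq_cube)
  with cpos have q: "4*c^2 - 2*c - 1 = 0" by simp
  hence "(4*c - 1)^2 = (sqrt 5)^2" by (simp add: power2_eq_square algebra_simps)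
  hence "4*c - 1 = sqrt 5 \<or> 4*c - 1 = - sqrt 5" using power2_eq_iff by blast
  moreover have "4*c - 1 \<noteq> - sqrt 5"
  proof
    assume "4*c - 1 = - sqrt 5"
    moreover have "sqrt 5 > 1" by simp
    ultimately show False using cpos by linarith
  qed
  ultimately show ?thesis unfolding c_def by auto
qed

lemma c2: "cos (2*pi/5) = (sqrt 5 - 1) / 4"
proof -
  have "cos (2*pi/5) = 2 * (cos (pi/5))^2 - 1"
    using cos_double_cos[of "pi/5"] by simp
  also have "\<dots> = (sqrt 5 - 1) / 4" unfolding c1 by (simp add: power2_eq_square algebra_simps)
  finally show ?thesis .
qed

lemma s1: "sin (pi/5) > 0" by (rule sin_gt_zero) auto
lemma s2: "sin (2*pi/5) > 0" by (rule sin_gt_zero) auto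
lemma s12: "sin (pi/5) \<noteq> sin (2*pi/5)"
proof
  assume h: "sin (pi/5) = sin (2*pi/5)"
  have "(cos (pi/5))^2 = (cos (2*pi/5))^2"
    using sin_squared_eq[of "pi/5"] sin_squared_eq[of "2*pi/5"] h by simp
  moreover have pos: "sqrt 5 > 0" by simp
  ultimately show False unfolding c1 c2 using pos by (simp add: power2_eq_square algebra_simps field_simps)
qed

abbreviation cA :: real where "cA \<equiv> cos (pi/5)"
abbreviation cB :: real where "cB \<equiv> cos (2*pi/5)"
abbreviation sA :: real where "sA \<equiv> sin (pi/5)"
abbreviation sB :: real where "sB \<equiv> sin (2*pi/5)"

lemma a3: "3*pi/5 = pi - 2*pi/5" and a4: "4*pi/5 = pi - pi/5" and a6: "6*pi/5 = pi/5 + pi"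
  and a7: "7*pi/5 = 2*pi/5 + pi" and a8: "8*pi/5 = (pi - 2*pi/5) + pi" and a9: "9*pi/5 = (pi - pi/5) + pi"
  and a5: "5*pi/5 = pi"
  by simp_all

lemma tr:
  "cos (3*pi/5) = -cB" "sin (3*pi/5) = sB"
  "cos (4*pi/5) = -cA" "sin (4*pi/5) = sA"
  "cos (5*pi/5) = -1" "sin (5*pi/5) = 0"
  "cos (6*pi/5) = -cA" "sin (6*pi/5) = -sA"
  "cos (7*pi/5) = -cB" "sin (7*pi/5) = -sB"
  "cos (8*pi/5) = cB" "sin (8*pi/5) = -sB"
  "cos (9*pi/5) = cA" "sin (9*pi/5) = -sA"
  by (simp only: a3 a4 a5 a6 a7 a8 a9 cos_pi_minus sin_pi_minus cos_periodic_pi sin_periodic_pi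
     cos_pi sin_pi minus_minus)+

lemma xi_tab:
  "xi ^ 1 = Complex cA sA" "xi^2 = Complex cB sB" "xi^3 = Complex (-cB) sB"
  "xi^4 = Complex (-cA) sA" "xi^5 = Complex (-1) 0" "xi^6 = Complex (-cA) (-sA)"
  "xi^7 = Complex (-cB) (-sB)" "xi^8 = Complex cB (-sB)" "xi^9 = Complex cA (-sA)"
  using xi_pow[of 1] xi_pow[of 2] xi_pow[of 3] xi_pow[of 4] xi_pow[of 5]
    xi_pow[of 6] xi_pow[of 7] xi_pow[of 8] xi_pow[of 9]
  by (simp_all only: of_nat_numeral of_nat_1 mult_1 tr)

lemma sum0: fixes k :: nat and c :: "nat \<Rightarrow> nat" shows "(\<Sum>j<k. c j) = (0::nat) \<Longrightarrow> (\<Sum>j<k. of_nat (c j) * f j) = (0::complex)"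
  by simp

lemma sum1: fixes k :: nat and c :: "nat \<Rightarrow> nat" shows "(\<Sum>j<k. c j) \<le> (1::nat) \<Longrightarrow>
   (\<Sum>j<k. of_nat (c j) * f j) = (0::complex) \<or> (\<exists>a<k. (\<Sum>j<k. of_nat (c j) * f j) = f a)"
proof (induction k)
  case 0 then show ?case by simp
next
  case (Suc k)
  have cs: "(\<Sum>j<Suc k. c j) = (\<Sum>j<k. c j) + c k" by simp
  have vs: "(\<Sum>j<Suc k. of_nat (c j) * f j) = (\<Sum>j<k. of_nat (c j) * f j) + of_nat (c k) * f k" by simp
  show ?case
  proof (cases "c k = 0")
    case True
    with Suc.prems cs have "(\<Sum>j<k. c j) \<le> 1" by simp
    moreover have "(\<Sum>j<Suc k. of_nat (c j) * f j) = (\<Sum>j<k. of_nat (c j) * f j)"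
      using vs True by simp
    ultimately show ?thesis using Suc.IH less_SucI by metis
  next
    case False
    have "c k = 1" using Suc.prems cs False by linarith
    moreover have "(\<Sum>j<k. c j) = 0" using Suc.prems cs False by linarith
    ultimately show ?thesis using sum0[of c k f] unfolding vs by auto
  qed
qed

lemma mono2: fixes k :: nat assumes "V = 0 \<or> (\<exists>a<k. V = f a) \<or> (\<exists>a<k. \<exists>b<k. V = f a + f b)"
  shows "V = 0 \<or> (\<exists>a<Suc k. V = f a) \<or> (\<exists>a<Suc k. \<exists>b<Suc k. V = f a + f b)"
  using assms
proof (elim disjE exE conjE)
  show "V = 0 \<Longrightarrow> ?thesis" by (rule disjI1)
next
  fix a assume "a < k" "V = f a"
  then have "\<exists>a<Suc k. V = f a" by (intro exI[of _ a] conjI) simp_all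
  then show ?thesis by (intro disjI2 disjI1)
next
  fix a b assume "a < k" "b < k" "V = f a + f b"
  then have "\<exists>a<Suc k. \<exists>b<Suc k. V = f a + f b" by (intro exI[of _ a] exI[of _ b] conjI) simp_all
  then show ?thesis by (intro disjI2)
qed

lemma sum2: fixes k :: nat and c :: "nat \<Rightarrow> nat" shows "(\<Sum>j<k. c j) \<le> (2::nat) \<Longrightarrow>
   (\<Sum>j<k. of_nat (c j) * f j) = (0::complex) \<or> (\<exists>a<k. (\<Sum>j<k. of_nat (c j) * f j) = f a)
   \<or> (\<exists>a<k. \<exists>b<k. (\<Sum>j<k. of_nat (c j) * f j) = f a + f b)"
proof (induction k)
  case 0 then show ?case by simp
next
  case (Suc k)
  have cs: "(\<Sum>j<Suc k. c j) = (\<Sum>j<k. c j) + c k" by simp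
  have vs: "(\<Sum>j<Suc k. of_nat (c j) * f j) = (\<Sum>j<k. of_nat (c j) * f j) + of_nat (c k) * f k" by simp
  have "c k = 0 \<or> c k = 1 \<or> c k = 2" using Suc.prems cs by linarith
  then show ?case
  proof (elim disjE)
    assume h: "c k = 0"
    have "(\<Sum>j<k. c j) \<le> 2" using Suc.prems cs h by linarith
    note D = Suc.IH[OF this]
    have eq: "(\<Sum>j<Suc k. of_nat (c j) * f j) = (\<Sum>j<k. of_nat (c j) * f j)"
      using vs h by simp
    show ?thesis unfolding eq by (rule mono2[OF D])
  next
    assume h: "c k = 1"
    have "(\<Sum>j<k. c j) \<le> 1" using Suc.prems cs h by linarith
    from sum1[OF this, of f] have
      "(\<Sum>j<k. of_nat (c j) * f j) = 0 \<or> (\<exists>a<k. (\<Sum>j<k. of_nat (c j) * f j) = f a)" .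
    moreover have eq: "(\<Sum>j<Suc k. of_nat (c j) * f j) = (\<Sum>j<k. of_nat (c j) * f j) + f k"
      using vs h by simp
    ultimately show ?thesis
    proof (elim disjE exE conjE)
      assume "(\<Sum>j<k. of_nat (c j) * f j) = 0"
      then have "(\<Sum>j<Suc k. of_nat (c j) * f j) = f k" using eq by simp
      then have "\<exists>a<Suc k. (\<Sum>j<Suc k. of_nat (c j) * f j) = f a"
        by (intro exI[of _ k] conjI) simp_all
      then show ?thesis by (intro disjI2 disjI1)
    next
      fix a assume "a < k" "(\<Sum>j<k. of_nat (c j) * f j) = f a"
      then have "(\<Sum>j<Suc k. of_nat (c j) * f j) = f a + f k" using eq by simp
      then have "\<exists>a<Suc k. \<exists>b<Suc k. (\<Sum>j<Suc k. of_nat (c j) * f j) = f a + f b"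
        using \<open>a < k\<close> by (intro exI[of _ a] exI[of _ k] conjI) simp_all
      then show ?thesis by (intro disjI2)
    qed
  next
    assume h: "c k = 2"
    have "(\<Sum>j<k. c j) = 0" using Suc.prems cs h by linarith
    then have z: "(\<Sum>j<k. of_nat (c j) * f j) = 0" by (rule sum0)
    have m: "of_nat (c k) * f k = f k + f k" unfolding h by simp
    have e: "(\<Sum>j<Suc k. of_nat (c j) * f j) = f k + f k"
      by (simp only: vs z m add_0_left)
    have "k < Suc k" by simp
    with e have "\<exists>a<Suc k. \<exists>b<Suc k. (\<Sum>j<Suc k. of_nat (c j) * f j) = f a + f b"
      by (intro exI[of _ k] conjI)
    then show ?thesis by (intro disjI2)
  qed
qed

lemma delta_sum: "a < (10::nat) \<Longrightarrow> (\<Sum>j<10. of_nat (if j = a then 1 else 0) * xi ^ j) = xi ^ a"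
proof -
  assume a: "a < 10"
  have "(\<Sum>j<10. of_nat (if j = a then 1 else 0) * xi ^ j) = (\<Sum>j<10. if j = a then xi ^ j else 0)"
    by (rule sum.cong) simp_all
  then show ?thesis using a by simp
qed

lemma delta_cnt: "a < (10::nat) \<Longrightarrow> (\<Sum>j<10. (if j = a then 1 else 0::nat)) = 1"
  by (simp add: sum.delta)

lemma in_Q2_0: "0 \<in> Q2 n"
  unfolding Q2_def by (rule CollectI, rule exI[of _ "\<lambda>_. 0"]) simp

lemma in_Q2_1: assumes "a < 10" "1 \<le> n" shows "xi ^ a \<in> Q2 n"
  unfolding Q2_def
proof (rule CollectI, rule exI[of _ "\<lambda>j. if j = a then 1 else 0"], rule conjI)
  show "(\<Sum>j<10. if j = a then 1 else 0) \<le> n" using delta_cnt[OF assms(1)] assms(2) by simp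
  show "xi ^ a = (\<Sum>j<10. of_nat (if j = a then 1 else 0) * xi ^ j)"
    using delta_sum[OF assms(1)] by simp
qed

lemma in_Q2_2: assumes "a < 10" "b < 10" shows "xi ^ a + xi ^ b \<in> Q2 2"
  unfolding Q2_def
proof (rule CollectI, rule exI[of _ "\<lambda>j. (if j = a then 1 else 0) + (if j = b then 1 else 0)"], rule conjI)
  show "(\<Sum>j<10. (if j = a then 1 else 0) + (if j = b then 1 else 0)) \<le> (2::nat)"
    using delta_cnt[OF assms(1)] delta_cnt[OF assms(2)] by (simp add: sum.distrib)
  have "(\<Sum>j<10. of_nat ((if j = a then 1 else 0) + (if j = b then 1 else 0)) * xi ^ j)
     = (\<Sum>j<10. of_nat (if j = a then 1 else 0) * xi ^ j) + (\<Sum>j<10. of_nat (if j = b then 1 else 0) * xi ^ j)"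
    by (simp only: of_nat_add distrib_right sum.distrib)
  then show "xi ^ a + xi ^ b = (\<Sum>j<10. of_nat ((if j = a then 1 else 0) + (if j = b then 1 else 0)) * xi ^ j)"
    using delta_sum[OF assms(1)] delta_sum[OF assms(2)] by simp
qed

lemma Q2_1_cases: "z \<in> Q2 1 \<Longrightarrow> z = 0 \<or> (\<exists>a<10. z = xi ^ a)"
  unfolding Q2_def using sum1[where f = "\<lambda>j. xi ^ j"] by auto

lemma Q2_2_cases: "z \<in> Q2 2 \<Longrightarrow> z = 0 \<or> (\<exists>a<10. z = xi ^ a) \<or> (\<exists>a<10. \<exists>b<10. z = xi ^ a + xi ^ b)"
  unfolding Q2_def using sum2[where f = "\<lambda>j. xi ^ j"] by auto

lemma lt10: "(a::nat) < 10 \<Longrightarrow> a = 0 \<or> a = 1 \<or> a = 2 \<or> a = 3 \<or> a = 4 \<or> a = 5 \<or> a = 6 \<or> a = 7 \<or> a = 8 \<or> a = 9"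
  by arith

lemma real_single: assumes "a < 10" "complex_of_real x = xi ^ a" shows "x = 1 \<or> x = -1"
  using lt10[OF assms(1)] assms(2) s1 s2
  by (elim disjE; simp only: xi_tab power_0; auto simp: complex_eq_iff)

lemma real_pair: assumes "a < 10" "b < 10" "complex_of_real x = xi ^ a + xi ^ b"
  shows "x = 0 \<or> x = 2 \<or> x = -2 \<or> x = 2 * cA \<or> x = - 2 * cA \<or> x = 2 * cB \<or> x = - 2 * cB"
  using lt10[OF assms(1)] lt10[OF assms(2)] assms(3) s1 s2 s12
  by (elim disjE; simp only: xi_tab power_0; auto simp: complex_eq_iff)

lemma cpx_eq: "complex_of_real x = Complex x 0" by (simp add: complex_eq_iff)

lemma pair_real: "a < 10 \<Longrightarrow> b < 10 \<Longrightarrow> xi ^ a + xi ^ b = complex_of_real x \<Longrightarrow> x \<in> L 2"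
  unfolding L_def using in_Q2_2 by fastforce

lemma L1_eq: "L 1 = {0, 1, -1}"
proof
  show "L 1 \<subseteq> {0, 1, -1}"
  proof
    fix x assume "x \<in> L 1"
    then have "complex_of_real x \<in> Q2 1" by (simp add: L_def)
    from Q2_1_cases[OF this] show "x \<in> {0, 1, -1}"
      using real_single by auto
  qed
  have "xi ^ 0 \<in> Q2 1" "xi ^ 5 \<in> Q2 1" by (rule in_Q2_1; simp)+
  moreover have "xi ^ 5 = complex_of_real (-1)" by (simp only: xi_tab cpx_eq)
  ultimately show "{0, 1, -1} \<subseteq> L 1" using in_Q2_0 by (auto simp: L_def)
qed

lemma L2_eq: "L 2 = {0, 1, -1, 2, -2, 2*cA, -2*cA, 2*cB, -2*cB}"
proof
  show "L 2 \<subseteq> {0, 1, -1, 2, -2, 2*cA, -2*cA, 2*cB, -2*cB}"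
  proof
    fix x assume "x \<in> L 2"
    then have "complex_of_real x \<in> Q2 2" by (simp add: L_def)
    from Q2_2_cases[OF this] show "x \<in> {0, 1, -1, 2, -2, 2*cA, -2*cA, 2*cB, -2*cB}"
      using real_single real_pair by fastforce
  qed
  have "xi ^ 0 \<in> Q2 2" "xi ^ 5 \<in> Q2 2" by (rule in_Q2_1; simp)+
  moreover have "xi ^ 5 = complex_of_real (-1)" by (simp only: xi_tab cpx_eq)
  ultimately have A: "{0, 1, -1} \<subseteq> L 2" using in_Q2_0 by (auto simp: L_def)
  have P1: "xi ^ 0 + xi ^ 0 = complex_of_real 2" by simp
  have B1: "2 \<in> L 2" by (rule pair_real[OF _ _ P1]) simp_all
  have P2: "xi ^ 5 + xi ^ 5 = complex_of_real (-2)" by (simp only: xi_tab cpx_eq) (simp add: complex_eq_iff)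
  have B2: "-2 \<in> L 2" by (rule pair_real[OF _ _ P2]) simp_all
  have P3: "xi ^ 1 + xi ^ 9 = complex_of_real (2*cA)" by (simp only: xi_tab cpx_eq) (simp add: complex_eq_iff)
  have B3: "2*cA \<in> L 2" by (rule pair_real[OF _ _ P3]) simp_all
  have P4: "xi ^ 4 + xi ^ 6 = complex_of_real (-2*cA)" by (simp only: xi_tab cpx_eq) (simp add: complex_eq_iff)
  have B4: "-2*cA \<in> L 2" by (rule pair_real[OF _ _ P4]) simp_all
  have P5: "xi ^ 2 + xi ^ 8 = complex_of_real (2*cB)" by (simp only: xi_tab cpx_eq) (simp add: complex_eq_iff)
  have B5: "2*cB \<in> L 2" by (rule pair_real[OF _ _ P5]) simp_all
  have P6: "xi ^ 3 + xi ^ 7 = complex_of_real (-2*cB)" by (simp only: xi_tab cpx_eq) (simp add: complex_eq_iff)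
  have B6: "-2*cB \<in> L 2" by (rule pair_real[OF _ _ P6]) simp_all
  show "{0, 1, -1, 2, -2, 2*cA, -2*cA, 2*cB, -2*cB} \<subseteq> L 2"
    using A B1 B2 B3 B4 B5 B6 by auto
qed

theorem proposition6p3:
  shows "L 2 - L 1 = {2, -2, tau, -tau, tau', -tau'}"
proof -
  have t1: "tau = 2*cA" unfolding tau_def c1 by simp
  have t2: "tau' = -2*cB" unfolding tau'_def c2 by (simp add: field_simps)
  have r1: "sqrt 5 > 2" by (simp add: real_less_rsqrt)
  have r2: "sqrt 5 < 3" by (simp add: real_sqrt_less_iff real_sqrt_less_mono[of 5 9, simplified])
  have ne: "tau \<notin> {0,1,-1}" "-tau \<notin> {0,1,-1}" "tau' \<notin> {0,1,-1}" "-tau' \<notin> {0,1,-1}"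
    using r1 r2 unfolding tau_def tau'_def by auto
  have e: "2*cA = tau" "-2*cA = -tau" "2*cB = -tau'" "-2*cB = tau'" using t1 t2 by simp_all
  have L2': "L 2 = {0, 1, -1, 2, -2, tau, -tau, -tau', tau'}" unfolding L2_eq e ..
  show ?thesis unfolding L1_eq L2' using ne by auto
qed

end
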